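(* For every $n$ with $2\le n\le\infty$, the two identities $$ysxt\,xy\,hxky \approx ysxt\,yx\,hxky \quad\text{and}\quad xsyt\,xy\,hxky \approx xsyt\,yx\,hxky$$ constitute a finite identity basis for the Baxter monoid $\mathrm{baxt}_n$. Consequently, all Baxter monoids of rank at least $2$ (including rank $\infty$) are equationally equivalent.
   Context: Let $\mathcal{A}=\{1<2<3<\cdots\}$, $\mathcal{A}_n=\{1<\cdots<n\}$, $\mathcal{A}_\infty=\mathcal{A}$. Right strict binary search tree: labelled rooted binary tree in which each node's label is $\ge$ every label in its left subtree and $<$ every label in its right subtree; inserting $a$: if empty create node $a$, else with root label $x$ insert into right subtree if $a>x$, left subtree otherwise. $\mathrm{P}_{\mathrm{sylv}}(w_1\cdots w_k)$ is obtained from the empty tree by inserting $w_k,\dots,w_1$ in this order. Left strict binary search tree: each node's label is $>$ every label in its left subtree and $\le$ every label in its right subtree; inserting $a$: if empty create node $a$, else with root label $x$ insert into left subtree if $a<x$, right subtree otherwise. $\mathrm{P}^\sharp(w_1\cdots w_k)$ is obtained from the empty tree by inserting $w_1,\dots,w_k$ in this order. Set $\mathrm{P}_{\mathrm{baxt}}(w)=(\mathrm{P}^\sharp(w),\mathrm{P}_{\mathrm{sylv}}(w))$; $u\equiv v\iff\mathrm{P}_{\mathrm{baxt}}(u)=\mathrm{P}_{\mathrm{baxt}}(v)$ is a congruence, and $\mathrm{baxt}_n=\mathcal{A}_n^*/{\equiv}$. Identities: $\mathcal{X}$ is a countably infinite alphabet; an identity is $\mathbf{u}\approx\mathbf{v}$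 with $\mathbf{u},\mathbf{v}\in\mathcal{X}^*$; a monoid $S$ satisfies it if $\varphi(\mathbf{u})=\varphi(\mathbf{v})$ for all maps $\varphi:\mathcal{X}\to S$ (extended to monoid homomorphisms). $\mathbf{u}\approx\mathbf{v}$ is derived from a set $\Sigma$ if there is a sequence $\mathbf{u}=\mathbf{u}_1,\dots,\mathbf{u}_m=\mathbf{v}$ with $\mathbf{u}_i=\mathbf{a}\varphi(\mathbf{p})\mathbf{b}$, $\mathbf{u}_{i+1}=\mathbf{a}\varphi(\mathbf{q})\mathbf{b}$ for some words $\mathbf{a},\mathbf{b}\in\mathcal{X}^*$, a monoid endomorphism $\varphi$ of $\mathcal{X}^*$ (letters may go to the empty word), and $\mathbf{p}\approx\mathbf{q}\in\Sigma$. A finite identity basis for $S$ is a finite set $\Sigma$ of identities satisfied by $S$ from which every identity satisfied by $S$ is derived. Two monoids are equationally equivalent if they satisfy the same identities. *)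

theory Defs
  imports Main "HOL-Library.Extended_Nat" "HOL-Library.Tree"
begin

definition alph :: "enat \<Rightarrow> nat set" where
  "alph n = {a. 1 \<le> a \<and> enat a \<le> n}"

fun ins_right :: "nat \<Rightarrow> nat tree \<Rightarrow> nat tree" where
  "ins_right a Leaf = Node Leaf a Leaf"
| "ins_right a (Node l x r) =
     (if a > x then Node l x (ins_right a r) else Node (ins_right a l) x r)"

fun ins_left :: "nat \<Rightarrow> nat tree \<Rightarrow> nat tree" where
  "ins_left a Leaf = Node Leaf a Leaf"
| "ins_left a (Node l x r) =
     (if a < x then Node (ins_left a l) x r else Node l x (ins_left a r))"

definition P_sylv :: "nat list \<Rightarrow> nat tree" where
  "P_sylv w = fold ins_right (rev w) Leaf"

definition P_sharp :: "nat list \<Rightarrow> nat tree" where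
  "P_sharp w = fold ins_left w Leaf"

definition P_baxt :: "nat list \<Rightarrow> nat tree \<times> nat tree" where
  "P_baxt w = (P_sharp w, P_sylv w)"

definition subst :: "(nat \<Rightarrow> 'a list) \<Rightarrow> nat list \<Rightarrow> 'a list" where
  "subst \<phi> u = concat (map \<phi> u)"

text \<open>Every element of baxt_n = A_n^*/\<equiv> is the class of
  a word over A_n and the quotient map is a monoid homomorphism, so an assignment
  X \<Rightarrow> baxt_n is given by an assignment X \<Rightarrow> A_n^* of representatives.\<close>
definition baxt_satisfies :: "enat \<Rightarrow> nat list \<Rightarrow> nat list \<Rightarrow> bool" where
  "baxt_satisfies n u v \<longleftrightarrow>
     (\<forall>\<phi> :: nat \<Rightarrow> nat list. (\<forall>x. set (\<phi> x) \<subseteq> alph n) \<longrightarrow>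
        P_baxt (subst \<phi> u) = P_baxt (subst \<phi> v))"

definition deriv_step :: "(nat list \<times> nat list) set \<Rightarrow> nat list \<Rightarrow> nat list \<Rightarrow> bool" where
  "deriv_step \<Sigma> u w \<longleftrightarrow>
     (\<exists>a b p q (\<phi> :: nat \<Rightarrow> nat list). ((p, q) \<in> \<Sigma> \<or> (q, p) \<in> \<Sigma>) \<and>
        u = a @ subst \<phi> p @ b \<and> w = a @ subst \<phi> q @ b)"

definition derivable :: "(nat list \<times> nat list) set \<Rightarrow> nat list \<Rightarrow> nat list \<Rightarrow> bool" where
  "derivable \<Sigma> = (deriv_step \<Sigma>)\<^sup>*\<^sup>*"

definition finite_identity_basis :: "enat \<Rightarrow> (nat list \<times> nat list) set \<Rightarrow> bool" where
  "finite_identity_basis n \<Sigma> \<longleftrightarrow> finite \<Sigma> \<and>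
     (\<forall>(p, q) \<in> \<Sigma>. baxt_satisfies n p q) \<and>
     (\<forall>u v. baxt_satisfies n u v \<longrightarrow> derivable \<Sigma> u v)"

abbreviation (input) vx :: nat where "vx \<equiv> 0"
abbreviation (input) vy :: nat where "vy \<equiv> 1"
abbreviation (input) vs :: nat where "vs \<equiv> 2"
abbreviation (input) vt :: nat where "vt \<equiv> 3"
abbreviation (input) vh :: nat where "vh \<equiv> 4"
abbreviation (input) vk :: nat where "vk \<equiv> 5"

definition baxter_basis :: "(nat list \<times> nat list) set" where
  "baxter_basis =
    {([vy,vs,vx,vt, vx,vy, vh,vx,vk,vy], [vy,vs,vx,vt, vy,vx, vh,vx,vk,vy]),
     ([vx,vs,vy,vt, vx,vy, vh,vx,vk,vy], [vx,vs,vy,vt, vy,vx, vh,vx,vk,vy])}"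

end

theory Submission
  imports Defs
begin

section \<open>Trees\<close>

fun bstr :: "nat tree \<Rightarrow> bool" where
  "bstr Leaf = True"
| "bstr (Node l x r) = (bstr l \<and> bstr r \<and> (\<forall>y\<in>set_tree l. y \<le> x) \<and> (\<forall>y\<in>set_tree r. x < y))"

fun bstl :: "nat tree \<Rightarrow> bool" where
  "bstl Leaf = True"
| "bstl (Node l x r) = (bstl l \<and> bstl r \<and> (\<forall>y\<in>set_tree l. y < x) \<and> (\<forall>y\<in>set_tree r. x \<le> y))"

lemma set_ins_right[simp]: "set_tree (ins_right a t) = insert a (set_tree t)"
  by (induction t) auto

lemma set_ins_left[simp]: "set_tree (ins_left a t) = insert a (set_tree t)"
  by (induction t) auto

lemma bstr_ins: "bstr t \<Longrightarrow> bstr (ins_right a t)"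
  by (induction t) auto

lemma bstl_ins: "bstl t \<Longrightarrow> bstl (ins_left a t)"
  by (induction t) auto

lemma comm_right: "bstr t \<Longrightarrow> a \<le> b \<Longrightarrow> b < c \<Longrightarrow> b \<in> set_tree t \<Longrightarrow>
  ins_right a (ins_right c t) = ins_right c (ins_right a t)"
proof (induction t)
  case Leaf then show ?case by simp
next
  case (Node l x r)
  show ?case
  proof (cases "a \<le> x \<and> x < c")
    case True then show ?thesis by auto
  next
    case False
    then have "c \<le> x \<or> x < a" by auto
    then show ?thesis
    proof
      assume "c \<le> x"
      then have "b \<in> set_tree l" using Node.prems by auto
      then show ?thesis using Node \<open>c \<le> x\<close> by auto
    next
      assume "x < a"
      then have "b \<in> set_tree r" using Node.prems by auto
      then show ?thesis using Node \<open>x < a\<close> by auto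
    qed
  qed
qed

lemma comm_left: "bstl t \<Longrightarrow> a < b \<Longrightarrow> b \<le> c \<Longrightarrow> b \<in> set_tree t \<Longrightarrow>
  ins_left a (ins_left c t) = ins_left c (ins_left a t)"
proof (induction t)
  case Leaf then show ?case by simp
next
  case (Node l x r)
  show ?case
  proof (cases "a < x \<and> x \<le> c")
    case True then show ?thesis by auto
  next
    case False
    then have "c < x \<or> x \<le> a" by auto
    then show ?thesis
    proof
      assume "c < x"
      then have "b \<in> set_tree l" using Node.prems by auto
      then show ?thesis using Node \<open>c < x\<close> by auto
    next
      assume "x \<le> a"
      then have "b \<in> set_tree r" using Node.prems by auto
      then show ?thesis using Node \<open>x \<le> a\<close> by auto
    qed
  qed
qed

lemma comm_right2: "bstr t \<Longrightarrow> a \<in> set_tree t \<Longrightarrow> c \<in> set_tree t \<Longrightarrow>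
  ins_right a (ins_right c t) = ins_right c (ins_right a t)"
  by (cases a c rule: linorder_cases) (auto intro: comm_right comm_right[symmetric])

lemma comm_left2: "bstl t \<Longrightarrow> a \<in> set_tree t \<Longrightarrow> c \<in> set_tree t \<Longrightarrow>
  ins_left a (ins_left c t) = ins_left c (ins_left a t)"
  by (cases a c rule: linorder_cases) (auto intro: comm_left comm_left[symmetric])

lemma set_fold_right[simp]: "set_tree (fold ins_right w t) = set w \<union> set_tree t"
  by (induction w arbitrary: t) auto

lemma set_fold_left[simp]: "set_tree (fold ins_left w t) = set w \<union> set_tree t"
  by (induction w arbitrary: t) auto

lemma bstr_fold: "bstr t \<Longrightarrow> bstr (fold ins_right w t)"
  by (induction w arbitrary: t) (auto simp: bstr_ins)

lemma bstl_fold: "bstl t \<Longrightarrow> bstl (fold ins_left w t)"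
  by (induction w arbitrary: t) (auto simp: bstl_ins)

lemma comm_right_one: "bstr t \<Longrightarrow> a \<in> set_tree t \<Longrightarrow> set ys \<subseteq> set_tree t \<Longrightarrow>
  fold ins_right ys (ins_right a t) = ins_right a (fold ins_right ys t)"
proof (induction ys arbitrary: t)
  case Nil then show ?case by simp
next
  case (Cons y ys)
  have "fold ins_right (y#ys) (ins_right a t) = fold ins_right ys (ins_right a (ins_right y t))"
    using comm_right2[of t y a] Cons.prems by simp
  also have "\<dots> = ins_right a (fold ins_right ys (ins_right y t))"
    using Cons.IH[of "ins_right y t"] Cons.prems bstr_ins by auto
  finally show ?case by simp
qed

lemma comm_left_one: "bstl t \<Longrightarrow> a \<in> set_tree t \<Longrightarrow> set ys \<subseteq> set_tree t \<Longrightarrow>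
  fold ins_left ys (ins_left a t) = ins_left a (fold ins_left ys t)"
proof (induction ys arbitrary: t)
  case Nil then show ?case by simp
next
  case (Cons y ys)
  have "fold ins_left (y#ys) (ins_left a t) = fold ins_left ys (ins_left a (ins_left y t))"
    using comm_left2[of t y a] Cons.prems by simp
  also have "\<dots> = ins_left a (fold ins_left ys (ins_left y t))"
    using Cons.IH[of "ins_left y t"] Cons.prems bstl_ins by auto
  finally show ?case by simp
qed

lemma comm_right_seq: "bstr t \<Longrightarrow> set xs \<subseteq> set_tree t \<Longrightarrow> set ys \<subseteq> set_tree t \<Longrightarrow>
  fold ins_right (xs @ ys) t = fold ins_right (ys @ xs) t"
proof (induction xs arbitrary: t)
  case Nil then show ?case by simp
next
  case (Cons x xs)
  have "fold ins_right ((x#xs) @ ys) t = fold ins_right (xs @ ys) (ins_right x t)" by simp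
  also have "\<dots> = fold ins_right (ys @ xs) (ins_right x t)"
    using Cons.IH[of "ins_right x t"] Cons.prems bstr_ins by auto
  also have "\<dots> = fold ins_right xs (fold ins_right ys (ins_right x t))" by simp
  also have "\<dots> = fold ins_right xs (ins_right x (fold ins_right ys t))"
    using comm_right_one[of t x ys] Cons.prems by simp
  also have "\<dots> = fold ins_right (ys @ x # xs) t" by simp
  finally show ?case by simp
qed

lemma comm_left_seq: "bstl t \<Longrightarrow> set xs \<subseteq> set_tree t \<Longrightarrow> set ys \<subseteq> set_tree t \<Longrightarrow>
  fold ins_left (xs @ ys) t = fold ins_left (ys @ xs) t"
proof (induction xs arbitrary: t)
  case Nil then show ?case by simp
next
  case (Cons x xs)
  have "fold ins_left ((x#xs) @ ys) t = fold ins_left (xs @ ys) (ins_left x t)" by simp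
  also have "\<dots> = fold ins_left (ys @ xs) (ins_left x t)"
    using Cons.IH[of "ins_left x t"] Cons.prems bstl_ins by auto
  also have "\<dots> = fold ins_left xs (fold ins_left ys (ins_left x t))" by simp
  also have "\<dots> = fold ins_left xs (ins_left x (fold ins_left ys t))"
    using comm_left_one[of t x ys] Cons.prems by simp
  also have "\<dots> = fold ins_left (ys @ x # xs) t" by simp
  finally show ?case by simp
qed

lemma key_swap:
  assumes "set X \<subseteq> set Pre" "set Y \<subseteq> set Pre" "set X \<subseteq> set Suf" "set Y \<subseteq> set Suf"
  shows "P_baxt (Pre @ X @ Y @ Suf) = P_baxt (Pre @ Y @ X @ Suf)"
proof -
  let ?t = "fold ins_left Pre Leaf"
  have "fold ins_left (X @ Y) ?t = fold ins_left (Y @ X) ?t"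
    by (rule comm_left_seq) (use assms bstl_fold[of Leaf Pre] in auto)
  then have 1: "P_sharp (Pre @ X @ Y @ Suf) = P_sharp (Pre @ Y @ X @ Suf)"
    unfolding P_sharp_def by (metis append.assoc fold_append o_apply)
  let ?s = "fold ins_right (rev Suf) Leaf"
  have "fold ins_right (rev Y @ rev X) ?s = fold ins_right (rev X @ rev Y) ?s"
    by (rule comm_right_seq) (use assms bstr_fold[of Leaf "rev Suf"] in auto)
  then have 2: "P_sylv (Pre @ X @ Y @ Suf) = P_sylv (Pre @ Y @ X @ Suf)"
    unfolding P_sylv_def by (metis append.assoc fold_append o_apply rev_append)
  show ?thesis using 1 2 by (simp add: P_baxt_def)
qed


section \<open>Soundness\<close>

lemma subst_append[simp]: "subst \<phi> (xs @ ys) = subst \<phi> xs @ subst \<phi> ys"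
  by (simp add: subst_def)

lemma subst_Cons[simp]: "subst \<phi> (x # xs) = \<phi> x @ subst \<phi> xs"
  by (simp add: subst_def)

lemma subst_Nil[simp]: "subst \<phi> [] = []"
  by (simp add: subst_def)

lemma subst_subst: "subst \<psi> (subst \<phi> p) = subst (\<lambda>z. subst \<psi> (\<phi> z)) p"
  by (induction p) auto

lemma basis_sound:
  assumes "(p, q) \<in> baxter_basis"
  shows "P_baxt (A @ subst \<Phi> p @ B) = P_baxt (A @ subst \<Phi> q @ B)"
proof -
  let ?X = "\<Phi> 0" and ?Y = "\<Phi> 1" and ?S = "\<Phi> 2" and ?T = "\<Phi> 3" and ?H = "\<Phi> 4" and ?K = "\<Phi> 5"
  from assms consider
    "p = [1,2,0,3,0,1,4,0,5,1]" "q = [1,2,0,3,1,0,4,0,5,1]"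
  | "p = [0,2,1,3,0,1,4,0,5,1]" "q = [0,2,1,3,1,0,4,0,5,1]"
    unfolding baxter_basis_def by auto
  then show ?thesis
  proof cases
    case 1
    have "P_baxt ((A @ ?Y @ ?S @ ?X @ ?T) @ ?X @ ?Y @ (?H @ ?X @ ?K @ ?Y @ B))
        = P_baxt ((A @ ?Y @ ?S @ ?X @ ?T) @ ?Y @ ?X @ (?H @ ?X @ ?K @ ?Y @ B))"
      by (rule key_swap) auto
    then show ?thesis using 1 by (simp add: numeral_eq_Suc)
  next
    case 2
    have "P_baxt ((A @ ?X @ ?S @ ?Y @ ?T) @ ?X @ ?Y @ (?H @ ?X @ ?K @ ?Y @ B))
        = P_baxt ((A @ ?X @ ?S @ ?Y @ ?T) @ ?Y @ ?X @ (?H @ ?X @ ?K @ ?Y @ B))"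
      by (rule key_swap) auto
    then show ?thesis using 2 by (simp add: numeral_eq_Suc)
  qed
qed

lemma step_sound: "deriv_step baxter_basis u w \<Longrightarrow> P_baxt (subst \<psi> u) = P_baxt (subst \<psi> w)"
proof -
  assume "deriv_step baxter_basis u w"
  then obtain a b p q \<phi> where pq: "(p, q) \<in> baxter_basis \<or> (q, p) \<in> baxter_basis"
    and u: "u = a @ subst \<phi> p @ b" and w: "w = a @ subst \<phi> q @ b"
    unfolding deriv_step_def by blast
  let ?F = "\<lambda>z. subst \<psi> (\<phi> z)"
  have su: "subst \<psi> u = subst \<psi> a @ subst ?F p @ subst \<psi> b" using u by (simp add: subst_subst)
  have sw: "subst \<psi> w = subst \<psi> a @ subst ?F q @ subst \<psi> b" using w by (simp add: subst_subst)
  from pq show ?thesis unfolding su sw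
    using basis_sound[of p q] basis_sound[of q p] by metis
qed

lemma derivable_sound: "derivable baxter_basis u w \<Longrightarrow> P_baxt (subst \<psi> u) = P_baxt (subst \<psi> w)"
  unfolding derivable_def
  by (induction rule: rtranclp_induct) (auto dest: step_sound[where \<psi>=\<psi>])


section \<open>Combinatorics of words\<close>

definition NN :: "nat \<Rightarrow> nat \<Rightarrow> nat list \<Rightarrow> nat" where
  "NN x y w = count_list (takeWhile (\<lambda>c. c \<noteq> y) w) x"

definition MM :: "nat \<Rightarrow> nat \<Rightarrow> nat list \<Rightarrow> nat" where
  "MM x y w = count_list (takeWhile (\<lambda>c. c \<noteq> x) (rev w)) y"

definition inv_eq :: "nat set \<Rightarrow> nat set \<Rightarrow> nat list \<Rightarrow> nat list \<Rightarrow> bool" where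
  "inv_eq P Q u v \<longleftrightarrow> (\<forall>x. count_list u x = count_list v x) \<and>
     (\<forall>x y. y \<notin> P \<longrightarrow> NN x y u = NN x y v) \<and> (\<forall>x y. x \<notin> Q \<longrightarrow> MM x y u = MM x y v)"

definition swr :: "nat set \<Rightarrow> nat set \<Rightarrow> nat list \<Rightarrow> nat list \<Rightarrow> bool" where
  "swr P Q u w \<longleftrightarrow> (\<exists>A B a b. a \<noteq> b \<and> a \<in> P \<union> set A \<and> b \<in> P \<union> set A \<and>
     a \<in> Q \<union> set B \<and> b \<in> Q \<union> set B \<and> u = A @ [a, b] @ B \<and> w = A @ [b, a] @ B)"

lemma tw_notin: "y \<notin> set A \<Longrightarrow> takeWhile (\<lambda>c. c \<noteq> y) (A @ C) = A @ takeWhile (\<lambda>c. c \<noteq> y) C"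
  by (induction A) auto

lemma tw_in: "y \<in> set A \<Longrightarrow> takeWhile (\<lambda>c. c \<noteq> y) (A @ C) = takeWhile (\<lambda>c. c \<noteq> y) A"
  by (induction A) auto

lemma inv_eq_refl: "inv_eq P Q u u" by (simp add: inv_eq_def)
lemma inv_eq_sym: "inv_eq P Q u v \<Longrightarrow> inv_eq P Q v u" by (simp add: inv_eq_def)
lemma inv_eq_trans: "inv_eq P Q u v \<Longrightarrow> inv_eq P Q v w \<Longrightarrow> inv_eq P Q u w"
  by (simp add: inv_eq_def)

lemma swr_cons: "swr (insert c P) Q u w \<Longrightarrow> swr P Q (c # u) (c # w)"
  unfolding swr_def
  apply clarify
  subgoal for A B a b
    by (rule exI[of _ "c # A"], rule exI[of _ B], rule exI[of _ a], rule exI[of _ b]) auto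
  done

lemma swr_cons_rtc: "(swr (insert c P) Q)\<^sup>*\<^sup>* u w \<Longrightarrow> (swr P Q)\<^sup>*\<^sup>* (c # u) (c # w)"
  by (induction rule: rtranclp_induct) (auto intro: rtranclp.rtrancl_into_rtrancl swr_cons)

lemma swr_inv: "swr P Q u w \<Longrightarrow> inv_eq P Q u w"
proof -
  assume "swr P Q u w"
  then obtain A B a b where ab: "a \<noteq> b" "a \<in> P \<union> set A" "b \<in> P \<union> set A"
     "a \<in> Q \<union> set B" "b \<in> Q \<union> set B" and u: "u = A @ [a, b] @ B" and w: "w = A @ [b, a] @ B"
    unfolding swr_def by blast
  have N: "NN x y u = NN x y w" if "y \<notin> P" for x y
  proof (cases "y \<in> set A")
    case True then show ?thesis unfolding NN_def u w by (simp add: tw_in)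
  next
    case False
    then have "y \<noteq> a" "y \<noteq> b" using ab that by auto
    then show ?thesis using False unfolding NN_def u w by (simp add: tw_notin)
  qed
  have M: "MM x y u = MM x y w" if "x \<notin> Q" for x y
  proof (cases "x \<in> set B")
    case True then show ?thesis unfolding MM_def u w by (simp add: tw_in)
  next
    case False
    then have "x \<noteq> a" "x \<noteq> b" using ab that by auto
    then show ?thesis using False unfolding MM_def u w by (simp add: tw_notin)
  qed
  show ?thesis unfolding inv_eq_def using N M u w by auto
qed

lemma swr_inv_rtc: "(swr P Q)\<^sup>*\<^sup>* u w \<Longrightarrow> inv_eq P Q u w"
  by (induction rule: rtranclp_induct) (auto intro: inv_eq_refl inv_eq_trans swr_inv)

lemma bubble:
  "b \<in> P \<Longrightarrow> b \<in> Q \<union> set B \<Longrightarrow>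
   (\<forall>A1 c A2. A = A1 @ [c] @ A2 \<longrightarrow> c \<noteq> b \<and> c \<in> P \<union> set A1 \<and> c \<in> Q \<union> set (A2 @ B)) \<Longrightarrow>
   (swr P Q)\<^sup>*\<^sup>* (A @ [b] @ B) (b # A @ B)"
proof (induction A arbitrary: B rule: rev_induct)
  case Nil then show ?case by simp
next
  case (snoc c A')
  have c: "c \<noteq> b" "c \<in> P \<union> set A'" "c \<in> Q \<union> set B"
    using snoc.prems(3)[rule_format, of A' c "[]"] by auto
  have "(swr P Q)\<^sup>*\<^sup>* (A' @ [b] @ (c # B)) (b # A' @ (c # B))"
  proof (rule snoc.IH)
    show "b \<in> P" by fact
    show "b \<in> Q \<union> set (c # B)" using snoc.prems by auto
    show "\<forall>A1 c' A2. A' = A1 @ [c'] @ A2 \<longrightarrow> c' \<noteq> b \<and> c' \<in> P \<union> set A1 \<and> c' \<in> Q \<union> set (A2 @ c # B)"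
    proof (intro allI impI)
      fix A1 c' A2 assume "A' = A1 @ [c'] @ A2"
      then have "A' @ [c] = A1 @ [c'] @ (A2 @ [c])" by simp
      then show "c' \<noteq> b \<and> c' \<in> P \<union> set A1 \<and> c' \<in> Q \<union> set (A2 @ c # B)"
        using snoc.prems(3)[rule_format, of A1 c' "A2 @ [c]"] by auto
    qed
  qed
  moreover have "swr P Q ((A' @ [c]) @ [b] @ B) (A' @ [b] @ (c # B))"
    unfolding swr_def
    by (rule exI[of _ A'], rule exI[of _ B], rule exI[of _ c], rule exI[of _ b])
       (use c snoc.prems in auto)
  ultimately show ?case by (auto intro: converse_rtranclp_into_rtranclp)
qed


lemma NN_cons: "y \<noteq> a \<Longrightarrow> NN x y (a # w) = (if a = x then 1 else 0) + NN x y w"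
  by (simp add: NN_def)

lemma NN_cons_same: "NN x a (a # w) = 0"
  by (simp add: NN_def)

lemma tw_all: "y \<notin> set A \<Longrightarrow> takeWhile (\<lambda>c. c \<noteq> y) A = A"
  using tw_notin[of y A "[]"] by simp

lemma MM_cons: "MM x y (a # w) = (if x \<notin> set w \<and> a \<noteq> x \<and> a = y then 1 else 0) + MM x y w"
proof (cases "x \<in> set w")
  case True
  then show ?thesis unfolding MM_def by (simp add: tw_in)
next
  case False
  then have F: "x \<notin> set (rev w)" by simp
  have "MM x y (a # w) = count_list (takeWhile (\<lambda>c. c \<noteq> x) (rev w @ [a])) y"
    unfolding MM_def by simp
  also have "\<dots> = count_list (rev w @ takeWhile (\<lambda>c. c \<noteq> x) [a]) y"
    by (subst tw_notin[OF F]) (rule refl)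
  also have "\<dots> = count_list w y + (if a \<noteq> x \<and> a = y then 1 else 0)" by (cases "a = x"; cases "a = y") auto
  finally have e1: "MM x y (a # w) = count_list w y + (if a \<noteq> x \<and> a = y then 1 else 0)" .
  have e2: "MM x y w = count_list w y" unfolding MM_def by (subst tw_all[OF F]) simp
  show ?thesis using e1 e2 False by simp
qed

lemma tw_count_le: "count_list (takeWhile p xs) y \<le> count_list xs y"
  by (induction xs) auto

lemma same_head: "inv_eq P Q (a # u) (a # v) \<Longrightarrow> inv_eq (insert a P) Q u v"
proof -
  assume h: "inv_eq P Q (a # u) (a # v)"
  have c: "count_list u x = count_list v x" for x
    using h unfolding inv_eq_def by (metis add_right_cancel count_list.simps(2))
  have s: "x \<in> set u \<longleftrightarrow> x \<in> set v" for x
    using c[of x] by (metis count_list_0_iff)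
  have N: "NN x y u = NN x y v" if "y \<notin> insert a P" for x y
  proof -
    have "NN x y (a # u) = NN x y (a # v)" using h that unfolding inv_eq_def by auto
    then show ?thesis using that by (simp add: NN_cons)
  qed
  have M: "MM x y u = MM x y v" if "x \<notin> Q" for x y
  proof -
    have "MM x y (a # u) = MM x y (a # v)" using h that unfolding inv_eq_def by auto
    then show ?thesis unfolding MM_cons s by simp
  qed
  show ?thesis unfolding inv_eq_def using c N M by auto
qed

lemma main_comb: "length u = n \<Longrightarrow> inv_eq P Q u v \<Longrightarrow> (swr P Q)\<^sup>*\<^sup>* u v"
proof (induction n arbitrary: P u v)
  case 0
  then have "u = []" by simp
  then have "\<forall>x. count_list v x = 0" using 0 unfolding inv_eq_def by simp
  then have "v = []" by (metis count_list_0_iff list.set_intros(1) neq_Nil_conv)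
  then show ?case using \<open>u = []\<close> by simp
next
  case (Suc n)
  then obtain a u' where u: "u = a # u'" by (cases u) auto
  have hc: "\<And>x. count_list u x = count_list v x"
    and hN: "\<And>x y. y \<notin> P \<Longrightarrow> NN x y u = NN x y v"
    and hM: "\<And>x y. x \<notin> Q \<Longrightarrow> MM x y u = MM x y v" using Suc.prems unfolding inv_eq_def by auto
  have sets: "x \<in> set u \<longleftrightarrow> x \<in> set v" for x using hc[of x] by (metis count_list_0_iff)
  then obtain b v' where v: "v = b # v'" using u by (cases v) auto
  show ?case
  proof (cases "a = b")
    case True
    have "inv_eq (insert a P) Q u' v'" using same_head Suc.prems(2) u v True by simp
    then have "(swr (insert a P) Q)\<^sup>*\<^sup>* u' v'" using Suc.IH Suc.prems(1) u by simp
    then show ?thesis using u v True swr_cons_rtc by simp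
  next
    case False
    have "b \<in> set u" using sets v by simp
    then obtain A B where AB: "u = A @ b # B" and bA: "b \<notin> set A" by (metis split_list_first)
    then obtain A' where A': "A = a # A'" using u False by (cases A) auto
    have bP: "b \<in> P"
    proof (rule ccontr)
      assume "b \<notin> P"
      then have "NN a b u = NN a b v" by (rule hN)
      then show False using u v False by (simp add: NN_cons NN_cons_same)
    qed
    have bQ: "b \<in> Q \<union> set B"
    proof (rule ccontr)
      assume "b \<notin> Q \<union> set B"
      then have nQ: "b \<notin> Q" and nB: "b \<notin> set B" by auto
      have "count_list v b = 1" using hc[of b] AB bA nB by simp
      then have nv': "b \<notin> set v'" using v by (simp add: count_list_0_iff[symmetric])
      have "MM b a u = count_list B a"
        unfolding MM_def AB using nB by (simp add: tw_notin)
      moreover have "count_list u a = count_list A a + count_list B a" using AB False by simp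
      moreover have "count_list A a \<ge> 1" using A' by simp
      moreover have "MM b a v = count_list v a"
        unfolding MM_def v using nv' False by (simp add: tw_notin tw_all)
      ultimately show False using hM[OF nQ, of a] hc[of a] by simp
    qed
    have cond: "\<forall>A1 c A2. A = A1 @ [c] @ A2 \<longrightarrow> c \<noteq> b \<and> c \<in> P \<union> set A1 \<and> c \<in> Q \<union> set (A2 @ B)"
    proof (intro allI impI)
      fix A1 c A2 assume A: "A = A1 @ [c] @ A2"
      have cb: "c \<noteq> b" using A bA by auto
      moreover have "c \<in> P \<union> set A1"
      proof (rule ccontr)
        assume "c \<notin> P \<union> set A1"
        then have nP: "c \<notin> P" and nA1: "c \<notin> set A1" by auto
        have "NN b c u = 0"
          unfolding NN_def AB A using nA1 bA A by (simp add: tw_notin)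
        moreover have "NN b c v \<ge> 1" using v cb by (simp add: NN_cons)
        ultimately show False using hN[OF nP, of b] by simp
      qed
      moreover have "c \<in> Q \<union> set (A2 @ B)"
      proof (rule ccontr)
        assume "c \<notin> Q \<union> set (A2 @ B)"
        then have nQ: "c \<notin> Q" and nA2: "c \<notin> set A2" and nB: "c \<notin> set B" by auto
        have "rev u = (rev B @ b # rev A2) @ [c] @ rev A1" using AB A by simp
        then have "MM c b u = count_list (rev B @ b # rev A2) b"
          unfolding MM_def using nA2 nB cb by (simp add: tw_notin)
        also have "\<dots> = count_list u b" using AB A bA by simp
        finally have m1: "MM c b u = count_list u b" .
        have "c \<in> set v'" using sets[of c] AB A v cb by auto
        then have "MM c b v = MM c b v'" using v by (simp add: MM_cons)
        also have "\<dots> \<le> count_list v' b" unfolding MM_def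
          using tw_count_le[of _ "rev v'" b] by simp
        finally have "MM c b v < count_list v b" using v by simp
        then show False using m1 hM[OF nQ, of b] hc[of b] by simp
      qed
      ultimately show "c \<noteq> b \<and> c \<in> P \<union> set A1 \<and> c \<in> Q \<union> set (A2 @ B)" by blast
    qed
    have r1: "(swr P Q)\<^sup>*\<^sup>* u (b # A @ B)"
      using bubble[OF bP bQ cond] AB by simp
    then have "inv_eq P Q u (b # A @ B)" by (rule swr_inv_rtc)
    then have "inv_eq P Q (b # (A @ B)) (b # v')"
      using Suc.prems(2) v inv_eq_sym inv_eq_trans by blast
    then have "inv_eq (insert b P) Q (A @ B) v'" by (rule same_head)
    moreover have "length (A @ B) = n" using AB Suc.prems(1) A' u by simp
    ultimately have "(swr (insert b P) Q)\<^sup>*\<^sup>* (A @ B) v'" using Suc.IH by simp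
    then have "(swr P Q)\<^sup>*\<^sup>* (b # A @ B) v" using v swr_cons_rtc by simp
    then show ?thesis using r1 by simp
  qed
qed


section \<open>Completeness\<close>

definition mkphi :: "'a list \<Rightarrow> 'a list \<Rightarrow> 'a list \<Rightarrow> 'a list \<Rightarrow> 'a list \<Rightarrow> 'a list \<Rightarrow> nat \<Rightarrow> 'a list" where
  "mkphi X Y S T H K = (\<lambda>i. if i = 0 then X else if i = 1 then Y else if i = 2 then S
      else if i = 3 then T else if i = 4 then H else K)"

lemma ds_intro: "(p, q) \<in> \<Sigma> \<or> (q, p) \<in> \<Sigma> \<Longrightarrow> deriv_step \<Sigma> (a @ subst \<phi> p @ b) (a @ subst \<phi> q @ b)"
  unfolding deriv_step_def by blast

lemma two_in: "a \<noteq> b \<Longrightarrow> a \<in> set A \<Longrightarrow> b \<in> set A \<Longrightarrow>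
  (\<exists>A1 A2 A3. A = A1 @ [a] @ A2 @ [b] @ A3) \<or> (\<exists>A1 A2 A3. A = A1 @ [b] @ A2 @ [a] @ A3)"
proof -
  assume ab: "a \<noteq> b" "a \<in> set A" "b \<in> set A"
  obtain A1 R where A: "A = A1 @ a # R" using ab(2) by (metis split_list_first)
  show ?thesis
  proof (cases "b \<in> set R")
    case True
    then obtain R1 R2 where "R = R1 @ b # R2" by (metis split_list)
    then show ?thesis using A by auto
  next
    case False
    then have "b \<in> set A1" using A ab by auto
    then obtain R1 R2 where "A1 = R1 @ b # R2" by (metis split_list)
    then have "A = R1 @ [b] @ R2 @ [a] @ R" using A by simp
    then show ?thesis by blast
  qed
qed

lemma p1: "([1,2,0,3,0,1,4,0,5,1], [1,2,0,3,1,0,4,0,5,1]) \<in> baxter_basis"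
  by (simp add: baxter_basis_def)
lemma p2: "([0,2,1,3,0,1,4,0,5,1], [0,2,1,3,1,0,4,0,5,1]) \<in> baxter_basis"
  by (simp add: baxter_basis_def)

lemma swr_step: "swr {} {} u w \<Longrightarrow> deriv_step baxter_basis u w"
proof -
  assume "swr {} {} u w"
  then obtain A B a b where ab: "a \<noteq> b" "a \<in> set A" "b \<in> set A" "a \<in> set B" "b \<in> set B"
    and u: "u = A @ [a, b] @ B" and w: "w = A @ [b, a] @ B"
    unfolding swr_def by auto
  from two_in[OF ab(1-3)] two_in[OF ab(1,4,5)] show ?thesis
  proof (elim disjE exE)
    fix A1 A2 A3 B1 B2 B3 assume A: "A = A1 @ [a] @ A2 @ [b] @ A3" and B: "B = B1 @ [a] @ B2 @ [b] @ B3"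
    have "deriv_step baxter_basis (A1 @ subst (mkphi [a] [b] A2 A3 B1 B2) [0,2,1,3,0,1,4,0,5,1] @ B3)
       (A1 @ subst (mkphi [a] [b] A2 A3 B1 B2) [0,2,1,3,1,0,4,0,5,1] @ B3)"
      by (rule ds_intro) (use p2 in blast)
    then show ?thesis using u w A B by (simp add: mkphi_def)
  next
    fix A1 A2 A3 B1 B2 B3 assume A: "A = A1 @ [a] @ A2 @ [b] @ A3" and B: "B = B1 @ [b] @ B2 @ [a] @ B3"
    have "deriv_step baxter_basis (A1 @ subst (mkphi [b] [a] A2 A3 B1 B2) [1,2,0,3,1,0,4,0,5,1] @ B3)
       (A1 @ subst (mkphi [b] [a] A2 A3 B1 B2) [1,2,0,3,0,1,4,0,5,1] @ B3)"
      by (rule ds_intro) (use p1 in blast)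
    then show ?thesis using u w A B by (simp add: mkphi_def)
  next
    fix A1 A2 A3 B1 B2 B3 assume A: "A = A1 @ [b] @ A2 @ [a] @ A3" and B: "B = B1 @ [a] @ B2 @ [b] @ B3"
    have "deriv_step baxter_basis (A1 @ subst (mkphi [a] [b] A2 A3 B1 B2) [1,2,0,3,0,1,4,0,5,1] @ B3)
       (A1 @ subst (mkphi [a] [b] A2 A3 B1 B2) [1,2,0,3,1,0,4,0,5,1] @ B3)"
      by (rule ds_intro) (use p1 in blast)
    then show ?thesis using u w A B by (simp add: mkphi_def)
  next
    fix A1 A2 A3 B1 B2 B3 assume A: "A = A1 @ [b] @ A2 @ [a] @ A3" and B: "B = B1 @ [b] @ B2 @ [a] @ B3"
    have "deriv_step baxter_basis (A1 @ subst (mkphi [b] [a] A2 A3 B1 B2) [0,2,1,3,1,0,4,0,5,1] @ B3)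
       (A1 @ subst (mkphi [b] [a] A2 A3 B1 B2) [0,2,1,3,0,1,4,0,5,1] @ B3)"
      by (rule ds_intro) (use p2 in blast)
    then show ?thesis using u w A B by (simp add: mkphi_def)
  qed
qed

lemma inv_derivable: "inv_eq {} {} u v \<Longrightarrow> derivable baxter_basis u v"
proof -
  assume "inv_eq {} {} u v"
  then have "(swr {} {})\<^sup>*\<^sup>* u v" using main_comb by blast
  then show ?thesis unfolding derivable_def
    by (induction rule: rtranclp_induct) (auto intro: rtranclp.rtrancl_into_rtrancl swr_step)
qed


section \<open>Rank-2 invariants\<close>

fun lsp :: "nat tree \<Rightarrow> nat" where
  "lsp Leaf = 0"
| "lsp (Node l x r) = (if x = 1 then Suc (lsp r) else 0)"

fun lok :: "nat tree \<Rightarrow> bool" where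
  "lok Leaf = True"
| "lok (Node l x r) = (x = 1 \<and> lok r)"

fun rsp :: "nat tree \<Rightarrow> nat" where
  "rsp Leaf = 0"
| "rsp (Node l x r) = (if x = 2 then Suc (rsp l) else 0)"

fun rok :: "nat tree \<Rightarrow> bool" where
  "rok Leaf = True"
| "rok (Node l x r) = (x = 2 \<and> rok l)"

lemma lsp_ins: "a \<noteq> 0 \<Longrightarrow> lsp (ins_left a t) = lsp t + (if lok t \<and> a = 1 then 1 else 0) \<and>
   lok (ins_left a t) = (lok t \<and> a = 1)"
  by (induction t) auto

lemma rsp_ins: "a \<le> 2 \<Longrightarrow> rsp (ins_right a t) = rsp t + (if rok t \<and> a = 2 then 1 else 0) \<and>
   rok (ins_right a t) = (rok t \<and> a = 2)"
  by (induction t) auto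

lemma lsp_fold: "\<forall>c\<in>set w. c \<noteq> 0 \<Longrightarrow>
  lsp (fold ins_left w t) = lsp t + (if lok t then length (takeWhile (\<lambda>c. c = 1) w) else 0) \<and>
  lok (fold ins_left w t) = (lok t \<and> (\<forall>c\<in>set w. c = 1))"
proof (induction w arbitrary: t)
  case Nil then show ?case by simp
next
  case (Cons c w)
  have "c \<noteq> 0" using Cons.prems by simp
  then show ?case using Cons.IH[of "ins_left c t"] Cons.prems lsp_ins[of c t] by auto
qed

lemma rsp_fold: "\<forall>c\<in>set w. c \<le> 2 \<Longrightarrow>
  rsp (fold ins_right w t) = rsp t + (if rok t then length (takeWhile (\<lambda>c. c = 2) w) else 0) \<and>
  rok (fold ins_right w t) = (rok t \<and> (\<forall>c\<in>set w. c = 2))"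
proof (induction w arbitrary: t)
  case Nil then show ?case by simp
next
  case (Cons c w)
  have "c \<le> 2" using Cons.prems by simp
  then show ?case using Cons.IH[of "ins_right c t"] Cons.prems rsp_ins[of c t] by auto
qed

lemma lsp_sharp: "\<forall>c\<in>set w. c \<noteq> 0 \<Longrightarrow> lsp (P_sharp w) = length (takeWhile (\<lambda>c. c = 1) w)"
  unfolding P_sharp_def using lsp_fold[of w Leaf] by simp

lemma rsp_sylv: "\<forall>c\<in>set w. c \<le> 2 \<Longrightarrow> rsp (P_sylv w) = length (takeWhile (\<lambda>c. c = 2) (rev w))"
  unfolding P_sylv_def using rsp_fold[of "rev w" Leaf] by simp

lemma count_ins: "count_list (inorder (ins_left a t)) y = count_list (inorder t) y + (if a = y then 1 else 0)"
  by (induction t) auto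

lemma count_fold: "count_list (inorder (fold ins_left w t)) y = count_list (inorder t) y + count_list w y"
  by (induction w arbitrary: t) (auto simp: count_ins)

lemma count_sharp: "count_list (inorder (P_sharp w)) y = count_list w y"
  unfolding P_sharp_def using count_fold[of w Leaf] by simp

definition phi2 :: "nat \<Rightarrow> nat \<Rightarrow> nat \<Rightarrow> nat list" where
  "phi2 x y = (\<lambda>z. if z = x then [1] else if z = y then [2] else [])"

definition phi1 :: "nat \<Rightarrow> nat \<Rightarrow> nat list" where
  "phi1 x = (\<lambda>z. if z = x then [1] else [])"

lemma phi2_lead: "x \<noteq> y \<Longrightarrow> length (takeWhile (\<lambda>c. c = 1) (subst (phi2 x y) w)) = NN x y w"
  by (induction w) (auto simp: phi2_def NN_def)

lemma phi2_trail: "x \<noteq> y \<Longrightarrow> length (takeWhile (\<lambda>c. c = 2) (subst (phi2 x y) w)) =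
   count_list (takeWhile (\<lambda>c. c \<noteq> x) w) y"
proof (induction w)
  case Nil then show ?case by simp
next
  case (Cons a w)
  then show ?case by (cases "a = x"; cases "a = y") (simp_all add: phi2_def)
qed

lemma phi2_rev: "rev (subst (phi2 x y) w) = subst (phi2 x y) (rev w)"
  by (induction w) (auto simp: phi2_def)

lemma phi1_count: "count_list (subst (phi1 x) w) 1 = count_list w x"
proof (induction w)
  case Nil then show ?case by simp
next
  case (Cons a w)
  then show ?case by (cases "a = x") (simp_all add: phi1_def)
qed

lemma phi2_set: "set (subst (phi2 x y) w) \<subseteq> {1, 2}"
  by (induction w) (auto simp: phi2_def)

lemma phi1_set: "set (subst (phi1 x) w) \<subseteq> {1}"
proof (induction w)
  case Nil then show ?case by simp
next
  case (Cons a w)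
  then show ?case by (cases "a = x") (simp_all add: phi1_def)
qed

lemma alph_ge2: "2 \<le> n \<Longrightarrow> {1, 2} \<subseteq> alph n"
proof -
  assume n: "2 \<le> n"
  have "enat 1 \<le> n" using n order_trans[of "enat 1" 2 n] by (simp add: numeral_eq_enat one_enat_def)
  moreover have "enat 2 \<le> n" using n by (simp add: numeral_eq_enat)
  ultimately show ?thesis unfolding alph_def by auto
qed

lemma tw_self: "count_list (takeWhile (\<lambda>c. c \<noteq> x) w) x = 0"
proof -
  have "x \<notin> set (takeWhile (\<lambda>c. c \<noteq> x) w)" by (auto dest: set_takeWhileD)
  then show ?thesis by (rule count_notin)
qed

lemma sat_inv:
  assumes n: "2 \<le> n" and sat: "baxt_satisfies n u v"
  shows "inv_eq {} {} u v"
proof -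
  have A: "{1, 2} \<subseteq> alph n" using alph_ge2[OF n] .
  have eq: "P_baxt (subst \<phi> u) = P_baxt (subst \<phi> v)" if "\<forall>x. set (\<phi> x) \<subseteq> {1, 2}" for \<phi>
    using sat A that unfolding baxt_satisfies_def by blast
  have c: "count_list u x = count_list v x" for x
  proof -
    have "\<forall>z. set (phi1 x z) \<subseteq> {1, 2}" by (auto simp: phi1_def)
    then have "P_sharp (subst (phi1 x) u) = P_sharp (subst (phi1 x) v)"
      using eq by (simp add: P_baxt_def)
    then have "count_list (subst (phi1 x) u) 1 = count_list (subst (phi1 x) v) 1"
      by (metis count_sharp)
    then show ?thesis using phi1_count[of x u] phi1_count[of x v] by simp
  qed
  have phi2ok: "\<forall>z. set (phi2 x y z) \<subseteq> {1, 2}" for x y by (auto simp: phi2_def)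
  have N: "NN x y u = NN x y v" for x y
  proof (cases "x = y")
    case True then show ?thesis by (simp add: NN_def tw_self)
  next
    case False
    have "P_sharp (subst (phi2 x y) u) = P_sharp (subst (phi2 x y) v)"
      using eq[OF phi2ok] by (simp add: P_baxt_def)
    then have "lsp (P_sharp (subst (phi2 x y) u)) = lsp (P_sharp (subst (phi2 x y) v))" by simp
    moreover have "\<forall>c\<in>set (subst (phi2 x y) w). c \<noteq> 0" for w using phi2_set[of x y w] by auto
    ultimately show ?thesis using lsp_sharp phi2_lead[OF False] by metis
  qed
  have M: "MM x y u = MM x y v" for x y
  proof (cases "x = y")
    case True then show ?thesis by (simp add: MM_def tw_self)
  next
    case False
    have "P_sylv (subst (phi2 x y) u) = P_sylv (subst (phi2 x y) v)"
      using eq[OF phi2ok] by (simp add: P_baxt_def)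
    then have "rsp (P_sylv (subst (phi2 x y) u)) = rsp (P_sylv (subst (phi2 x y) v))" by simp
    moreover have "\<forall>c\<in>set (subst (phi2 x y) w). c \<le> 2" for w using phi2_set[of x y w] by auto
    ultimately have "length (takeWhile (\<lambda>c. c = 2) (rev (subst (phi2 x y) u))) =
        length (takeWhile (\<lambda>c. c = 2) (rev (subst (phi2 x y) v)))" using rsp_sylv by metis
    then show ?thesis unfolding MM_def phi2_rev phi2_trail[OF False] .
  qed
  show ?thesis unfolding inv_eq_def using c N M by blast
qed

lemma derivable_sat: "derivable baxter_basis u v \<Longrightarrow> baxt_satisfies n u v"
  unfolding baxt_satisfies_def using derivable_sound by blast

theorem theorem4p10:
  shows "(\<forall>n::enat. 2 \<le> n \<longrightarrow> finite_identity_basis n baxter_basis) \<and>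
         (\<forall>m n :: enat. 2 \<le> m \<longrightarrow> 2 \<le> n \<longrightarrow>
            (\<forall>u v. baxt_satisfies m u v \<longleftrightarrow> baxt_satisfies n u v))"
proof (intro conjI allI impI)
  fix n :: enat assume n: "2 \<le> n"
  have fin: "finite baxter_basis" by (simp add: baxter_basis_def)
  have sound: "\<forall>(p, q)\<in>baxter_basis. baxt_satisfies n p q"
  proof (intro ballI, clarify)
    fix p q assume "(p, q) \<in> baxter_basis"
    then have "deriv_step baxter_basis p q"
      using ds_intro[of p q baxter_basis "[]" "\<lambda>z. [z]" "[]"] by (simp add: subst_def)
    then have "derivable baxter_basis p q" by (simp add: derivable_def)
    then show "baxt_satisfies n p q" by (rule derivable_sat)
  qed
  show "finite_identity_basis n baxter_basis"
    unfolding finite_identity_basis_def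
    using fin sound sat_inv[OF n] inv_derivable by blast
next
  fix m n :: enat and u v assume m: "2 \<le> m" and n: "2 \<le> n"
  show "baxt_satisfies m u v \<longleftrightarrow> baxt_satisfies n u v"
    using sat_inv[OF m] sat_inv[OF n] inv_derivable derivable_sat by blast
qed

end
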